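(* In the setting described in the context, $\mathcal{V}(X)<\infty$ for every $X\in\mathcal{K}(\mathbb{R}^n)$ with $X\cap\mathcal{D}_{\mathcal{A}}\neq\emptyset$.
   Context: Let $\|\cdot\|$ be a norm on $\mathbb{R}^n$ and $\mathrm{dist}(x,\Omega):=\inf_{y\in\Omega}\|x-y\|$. Let $\mathcal{K}(\mathbb{R}^n)$ denote the nonempty compact subsets of $\mathbb{R}^n$. Consider $x_{k+1}=f(x_k,u_k)$ with $f:\mathbb{R}^n\times\mathbb{R}^m\to\mathbb{R}^n$ continuous and inputs $u_k\in U$, $U\subset\mathbb{R}^m$ nonempty compact. For $x\in\mathbb{R}^n$ and $\pi:\mathbb{Z}_+\to U$, $\varphi_x^\pi(0)=x$, $\varphi_x^\pi(k+1)=f(\varphi_x^\pi(k),\pi(k))$; $\mathcal{R}(X,k):=\{\varphi_x^\pi(k):x\in X,\pi\in U^{\mathbb{Z}_+}\}$. Let $\mathcal{A}\in\mathcal{K}(\mathbb{R}^n)$ be controlled invariant. Assume local $\ell_p$-stabilizability: there exist $r>0$, $M\ge1$, $p>0$, $\lambda:[0,r]\times\mathbb{Z}_+\to\mathbb{R}_+$ such that (1) for each $k$, $s\mapsto\lambda(s,k)$ is continuous, nondecreasing, $\lambda(0,k)=0$; for each $s$, $k\mapsto\lambda(s,k)$ is nonincreasing, $\lambda(s,0)\le s$; (2) $\sum_{k}\lambda(r,k)^p<\infty$; (3) for every $x$ with $\mathrm{dist}(x,\mathcal{A})\le r$ there is $\pi\in U^{\mathbb{Z}_+}$ with $\mathrm{dist}(\varphi_x^\pi(k),\mathcal{A})\le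 M\lambda(\mathrm{dist}(x,\mathcal{A}),k)$ for all $k$. Let $\mathcal{D}_{\mathcal{A}}:=\{x:\exists\pi\in U^{\mathbb{Z}_+},\ \lim_{k\to\infty}\mathrm{dist}(\varphi_x^\pi(k),\mathcal{A})=0\}$. Let $\alpha:\mathbb{R}^n\to\mathbb{R}_+$ be continuous with $\underline{\alpha}\,\mathrm{dist}(x,\mathcal{A})^{\bar p}\le\alpha(x)\le\overline{\alpha}\,\mathrm{dist}(x,\mathcal{A})^{\bar p}$, constants $\underline{\alpha},\overline{\alpha}>0$, $\bar p\ge p$. Define $\Psi(X):=\inf_{y\in X}\alpha(y)$ and $\mathcal{V}(X):=\sum_{k=0}^\infty\Psi(\mathcal{R}(X,k))\in[0,\infty]$. *)

theory Defs
  imports "HOL-Analysis.Analysis"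
begin

definition is_norm :: "('a::euclidean_space \<Rightarrow> real) \<Rightarrow> bool" where
  "is_norm N \<longleftrightarrow> (\<forall>x. 0 \<le> N x) \<and> (\<forall>x. N x = 0 \<longleftrightarrow> x = 0)
     \<and> (\<forall>c x. N (scaleR c x) = \<bar>c\<bar> * N x) \<and> (\<forall>x y. N (x + y) \<le> N x + N y)"

definition setdist :: "('a::euclidean_space \<Rightarrow> real) \<Rightarrow> 'a \<Rightarrow> 'a set \<Rightarrow> real" where
  "setdist N x \<Omega> = (INF y\<in>\<Omega>. N (x - y))"

fun traj :: "('a \<Rightarrow> 'b \<Rightarrow> 'a) \<Rightarrow> 'a \<Rightarrow> (nat \<Rightarrow> 'b) \<Rightarrow> nat \<Rightarrow> 'a" where
  "traj f x \<pi> 0 = x"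
| "traj f x \<pi> (Suc k) = f (traj f x \<pi> k) (\<pi> k)"

definition reach :: "('a \<Rightarrow> 'b \<Rightarrow> 'a) \<Rightarrow> 'b set \<Rightarrow> 'a set \<Rightarrow> nat \<Rightarrow> 'a set" where
  "reach f U X k = {traj f x \<pi> k | x \<pi>. x \<in> X \<and> (\<forall>j. \<pi> j \<in> U)}"

definition controlled_invariant :: "('a \<Rightarrow> 'b \<Rightarrow> 'a) \<Rightarrow> 'b set \<Rightarrow> 'a set \<Rightarrow> bool" where
  "controlled_invariant f U A \<longleftrightarrow> (\<forall>x\<in>A. \<exists>u\<in>U. f x u \<in> A)"

definition local_lp_stabilizable_with ::
  "('a::euclidean_space \<Rightarrow> real) \<Rightarrow> ('a \<Rightarrow> 'b \<Rightarrow> 'a) \<Rightarrow> 'b set \<Rightarrow> 'a set \<Rightarrow> real \<Rightarrow> bool" where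
  "local_lp_stabilizable_with N f U A p \<longleftrightarrow>
    (\<exists>r M (lam :: real \<Rightarrow> nat \<Rightarrow> real). r > 0 \<and> M \<ge> 1 \<and> p > 0 \<and>
      (\<forall>s\<in>{0..r}. \<forall>k. 0 \<le> lam s k) \<and>
      (\<forall>k. continuous_on {0..r} (\<lambda>s. lam s k) \<and> mono_on {0..r} (\<lambda>s. lam s k) \<and> lam 0 k = 0) \<and>
      (\<forall>s\<in>{0..r}. antimono (lam s) \<and> lam s 0 \<le> s) \<and>
      summable (\<lambda>k. lam r k powr p) \<and>
      (\<forall>x. setdist N x A \<le> r \<longrightarrow>
         (\<exists>\<pi>. (\<forall>j. \<pi> j \<in> U) \<and>
            (\<forall>k. setdist N (traj f x \<pi> k) A \<le> M * lam (setdist N x A) k))))"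

definition domA :: "('a::euclidean_space \<Rightarrow> real) \<Rightarrow> ('a \<Rightarrow> 'b \<Rightarrow> 'a) \<Rightarrow> 'b set \<Rightarrow> 'a set \<Rightarrow> 'a set" where
  "domA N f U A = {x. \<exists>\<pi>. (\<forall>j. \<pi> j \<in> U) \<and> ((\<lambda>k. setdist N (traj f x \<pi> k) A) \<longlonglongrightarrow> 0)}"

definition Psi :: "('a \<Rightarrow> real) \<Rightarrow> 'a set \<Rightarrow> real" where
  "Psi \<alpha> X = (INF y\<in>X. \<alpha> y)"

definition Vfun :: "('a \<Rightarrow> real) \<Rightarrow> ('a \<Rightarrow> 'b \<Rightarrow> 'a) \<Rightarrow> 'b set \<Rightarrow> 'a set \<Rightarrow> ennreal" where
  "Vfun \<alpha> f U X = (\<Sum>k. ennreal (Psi \<alpha> (reach f U X k)))"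

end

theory Submission
  imports Defs
begin

lemma traj_agree:
  "(\<And>j. j < K \<Longrightarrow> \<pi> j = \<sigma> j) \<Longrightarrow> k \<le> K \<Longrightarrow> traj f x \<pi> k = traj f x \<sigma> k"
  by (induction k) auto

lemma traj_shift:
  "traj f x \<pi> (K + k) = traj f (traj f x \<pi> K) (\<lambda>j. \<pi> (K + j)) k"
  by (induction k) auto

lemma setdist_nonneg:
  assumes "is_norm N" "A \<noteq> {}"
  shows "0 \<le> setdist N x A"
  unfolding setdist_def using assms
  by (intro cINF_greatest) (auto simp: is_norm_def)

lemma summable_powr_bigger:
  fixes g :: "nat \<Rightarrow> real"
  assumes g0: "\<And>k. 0 \<le> g k" and s: "summable (\<lambda>k. g k powr p)" and p: "p > 0" and pp: "p \<le> q"
  shows "summable (\<lambda>k. g k powr q)"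
proof -
  have "(\<lambda>k. g k powr p) \<longlonglongrightarrow> 0" using summable_LIMSEQ_zero[OF s] .
  then have ev: "eventually (\<lambda>k. g k powr p < 1) sequentially"
    by (auto dest: order_tendstoD(2)[where a=1])
  have "eventually (\<lambda>k. norm (g k powr q) \<le> g k powr p) sequentially"
    using ev
  proof eventually_elim
    case (elim k)
    have "g k \<le> 1"
    proof (rule ccontr)
      assume "\<not> g k \<le> 1"
      then have "1 < g k" by simp
      then have "1 < g k powr p" using p by (simp add: powr_less_mono2[of p 1 "g k", simplified])
      then show False using elim by simp
    qed
    then show ?case using powr_mono'[OF pp g0[of k]] by simp
  qed
  then show ?thesis by (rule summable_comparison_test_ev) (rule s)
qed

theorem lemma5:
  fixes N :: "'a::euclidean_space \<Rightarrow> real"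
    and f :: "'a \<Rightarrow> 'b::euclidean_space \<Rightarrow> 'a"
    and U :: "'b set" and A :: "'a set" and \<alpha> :: "'a \<Rightarrow> real"
    and p pbar alo ahi :: real and X :: "'a set"
  assumes "is_norm N"
    and "continuous_on UNIV (\<lambda>(x, u). f x u)"
    and "compact U" "U \<noteq> {}"
    and "compact A" "A \<noteq> {}"
    and "controlled_invariant f U A"
    and "local_lp_stabilizable_with N f U A p"
    and "continuous_on UNIV \<alpha>"
    and "\<forall>x. 0 \<le> \<alpha> x"
    and "alo > 0" "ahi > 0" "pbar \<ge> p"
    and "\<forall>x. alo * setdist N x A powr pbar \<le> \<alpha> x \<and> \<alpha> x \<le> ahi * setdist N x A powr pbar"
    and "compact X" "X \<noteq> {}"
    and "X \<inter> domA N f U A \<noteq> {}"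
  shows "Vfun \<alpha> f U X < \<infinity>"
proof -
  note sd0 = setdist_nonneg[OF assms(1) assms(6)]
  obtain r M lam where r: "r > 0" and M: "M \<ge> 1" and p: "p > 0"
    and lam0: "\<forall>s\<in>{0..r}. \<forall>k. 0 \<le> lam s k"
    and lammono: "\<forall>k. mono_on {0..r} (\<lambda>s. lam s k)"
    and lamsum: "summable (\<lambda>k. lam r k powr p)"
    and stab: "\<forall>x. setdist N x A \<le> r \<longrightarrow>
         (\<exists>\<pi>. (\<forall>j. \<pi> j \<in> U) \<and>
            (\<forall>k. setdist N (traj f x \<pi> k) A \<le> M * lam (setdist N x A) k))"
    using assms(8) unfolding local_lp_stabilizable_with_def by metis
  obtain x0 \<pi>0 where x0: "x0 \<in> X" and \<pi>0U: "\<forall>j. \<pi>0 j \<in> U"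
    and lim: "(\<lambda>k. setdist N (traj f x0 \<pi>0 k) A) \<longlonglongrightarrow> 0"
    using assms(17) unfolding domA_def by blast
  have "eventually (\<lambda>k. setdist N (traj f x0 \<pi>0 k) A < r) sequentially"
    using order_tendstoD(2)[OF lim r] .
  then obtain K where K: "setdist N (traj f x0 \<pi>0 K) A < r"
    by (meson eventually_sequentially order_refl)
  define y where "y = traj f x0 \<pi>0 K"
  obtain \<pi>1 where \<pi>1U: "\<forall>j. \<pi>1 j \<in> U"
    and \<pi>1: "\<forall>k. setdist N (traj f y \<pi>1 k) A \<le> M * lam (setdist N y A) k"
    using stab[rule_format, of y] K unfolding y_def[symmetric] by auto
  define \<pi> where "\<pi> j = (if j < K then \<pi>0 j else \<pi>1 (j - K))" for j
  have \<pi>U: "\<forall>j. \<pi> j \<in> U" using \<pi>0U \<pi>1U by (simp add: \<pi>_def)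
  have tK: "traj f x0 \<pi> K = y"
    unfolding y_def by (rule traj_agree[where K=K]) (auto simp: \<pi>_def)
  have tKk: "traj f x0 \<pi> (K + k) = traj f y \<pi>1 k" for k
    using traj_shift[of f x0 \<pi> K k] tK by (simp add: \<pi>_def)
  define g where "g k = Psi \<alpha> (reach f U X k)" for k
  have bdd: "bdd_below (\<alpha> ` reach f U X k)" for k
    using assms(10) by (auto intro: bdd_belowI)
  have g0: "0 \<le> g k" for k
  proof -
    have "reach f U X k \<noteq> {}"
      using x0 \<pi>U unfolding reach_def by blast
    then show ?thesis unfolding g_def Psi_def using assms(10)
      by (intro cINF_greatest) auto
  qed
  have lamr0: "0 \<le> lam r k" for k using lam0 r by auto
  have dy: "0 \<le> setdist N y A" "setdist N y A \<le> r" using sd0 K y_def by auto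
  have gK: "g (k + K) \<le> (ahi * M powr pbar) * lam r k powr pbar" for k
  proof -
    have mem: "traj f x0 \<pi> (K + k) \<in> reach f U X (K + k)"
      unfolding reach_def using x0 \<pi>U by blast
    have "g (k + K) \<le> \<alpha> (traj f y \<pi>1 k)"
      unfolding g_def Psi_def using cINF_lower[OF bdd mem] tKk by (simp add: add.commute)
    also have "\<dots> \<le> ahi * setdist N (traj f y \<pi>1 k) A powr pbar" using assms(14) by blast
    also have "\<dots> \<le> ahi * (M * lam r k) powr pbar"
    proof -
      have "lam (setdist N y A) k \<le> lam r k"
        using lammono dy r by (auto simp: mono_on_def)
      then have "setdist N (traj f y \<pi>1 k) A \<le> M * lam r k"
        using \<pi>1 M by (meson dual_order.trans mult_left_mono zero_le_one order_trans)
      then show ?thesis using assms(12,13) p sd0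
        by (intro mult_left_mono powr_mono2) auto
    qed
    also have "\<dots> = (ahi * M powr pbar) * lam r k powr pbar"
      using M lamr0 by (simp add: powr_mult)
    finally show ?thesis .
  qed
  have "summable (\<lambda>k. lam r k powr pbar)"
    using summable_powr_bigger[OF lamr0 lamsum p assms(13)] .
  then have "summable (\<lambda>k. (ahi * M powr pbar) * lam r k powr pbar)"
    by (rule summable_mult)
  then have "summable (\<lambda>k. g (k + K))"
    by (rule summable_comparison_test'[where N=0]) (use gK g0 in auto)
  then have sg: "summable g" by simp
  have "Vfun \<alpha> f U X = ennreal (\<Sum>k. g k)"
    unfolding Vfun_def g_def[symmetric] using suminf_ennreal2[OF g0 sg] by simp
  then show ?thesis by simp
qed

end
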